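(* Let $n,k\ge0$ be integers, $R\subseteq[0,k]$ and $R^c=[0,k]\setminus R$. Define $$\binom{n}{k,R}=\#\bigl\{\{s_1<s_2<\dots<s_k\}\subseteq[n] : s_{i+1}=s_i+1\text{ for all } i\in R\bigr\},$$ with the conventions $s_0=0$ and $s_{k+1}=n+1$. Then $$\binom{n}{k,R}=\sum_{\ell\ge0}(-1)^{\ell-k}\binom{\ell}{k,R^c}\binom{n}{\ell},$$ where $\binom{n}{\ell}$ is the ordinary binomial coefficient.
   Context: $[n]=\{1,\dots,n\}$ and $[0,k]=\{0,1,\dots,k\}$. *)

theory Defs
  imports Complex_Main
begin

definition spt :: "nat \<Rightarrow> nat \<Rightarrow> nat set \<Rightarrow> nat \<Rightarrow> nat" where
  "spt n k S i = (if i = 0 then 0 else if i = k + 1 then n + 1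
                  else sorted_list_of_set S ! (i - 1))"

definition binomR :: "nat \<Rightarrow> nat \<Rightarrow> nat set \<Rightarrow> nat" where
  "binomR n k R = card {S. S \<subseteq> {1..n} \<and> card S = k \<and>
      (\<forall>i\<in>R. spt n k S (Suc i) = spt n k S i + 1)}"

end

theory Submission
  imports Defs "HOL-Computational_Algebra.Formal_Power_Series"
begin

definition Cset :: "nat set \<Rightarrow> nat \<Rightarrow> (nat \<Rightarrow> nat) set" where
  "Cset A N = {h. (\<forall>i. i \<notin> A \<longrightarrow> h i = 0) \<and> sum h A = N}"

lemma sum_choose_aux: "(\<Sum>j\<le>N. (j + c - 1) choose j) = (N + c) choose N"
proof (cases c)
  case 0
  have "(\<Sum>j\<le>N. (j + c - 1) choose j) = (\<Sum>j\<le>N. if j = 0 then 1 else 0)"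
    by (rule sum.cong) (auto simp: 0)
  also have "\<dots> = 1" by simp
  finally show ?thesis by (simp add: 0)
next
  case (Suc r)
  have "(\<Sum>j\<le>N. (j + c - 1) choose j) = (\<Sum>j\<le>N. (r + j) choose j)"
    by (rule sum.cong) (auto simp: Suc add.commute)
  also have "\<dots> = Suc (r + N) choose N" by (rule sum_choose_lower)
  finally show ?thesis by (simp add: Suc add.commute)
qed

lemma Cset_card: "finite A \<Longrightarrow> finite (Cset A N) \<and> card (Cset A N) = (N + card A - 1) choose N"
proof (induction A arbitrary: N rule: finite_induct)
  case empty
  have "Cset {} N = (if N = 0 then {\<lambda>_. 0} else {})"
    by (auto simp: Cset_def)
  then show ?case by auto
next
  case (insert a A)
  let ?f = "\<lambda>(j, h). h(a := j)"
  let ?S = "SIGMA j:{0..N}. Cset A (N - j)"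
  have eq: "Cset (insert a A) N = ?f ` ?S"
  proof
    show "Cset (insert a A) N \<subseteq> ?f ` ?S"
    proof
      fix h assume h: "h \<in> Cset (insert a A) N"
      have s: "sum h (insert a A) = h a + sum h A" using insert by simp
      have "sum (h(a:=0)) A = sum h A" using insert by (intro sum.cong) auto
      then have "(h a, h(a:=0)) \<in> ?S" using h s by (auto simp: Cset_def)
      moreover have "h = ?f (h a, h(a:=0))" by simp
      ultimately show "h \<in> ?f ` ?S" by blast
    qed
  next
    show "?f ` ?S \<subseteq> Cset (insert a A) N"
    proof
      fix x assume "x \<in> ?f ` ?S"
      then obtain j h where jh: "j \<le> N" "h \<in> Cset A (N - j)" and x: "x = h(a:=j)" by auto
      have "sum (h(a:=j)) A = sum h A" using insert by (intro sum.cong) auto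
      then show "x \<in> Cset (insert a A) N" using jh insert x by (auto simp: Cset_def)
    qed
  qed
  have inj: "inj_on ?f ?S"
  proof (rule inj_onI, clarify)
    fix j h j' h'
    assume h: "h \<in> Cset A (N - j)" and h': "h' \<in> Cset A (N - j')" and e: "h(a := j) = h'(a := j')"
    from e have "j = j'" by (metis fun_upd_same)
    moreover have "h = h'"
    proof
      fix i show "h i = h' i"
      proof (cases "i = a")
        case True then show ?thesis using h h' insert by (auto simp: Cset_def)
      next
        case False then show ?thesis using e by (metis fun_upd_other)
      qed
    qed
    ultimately show "j = j' \<and> h = h'" by simp
  qed
  have fin: "finite ?S" using insert by auto
  have "card (Cset (insert a A) N) = card ?S" using eq inj card_image by metis
  also have "\<dots> = (\<Sum>j\<in>{0..N}. card (Cset A (N - j)))" using insert by (simp add: card_SigmaI)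
  also have "\<dots> = (\<Sum>j\<in>{0..N}. (N - j + card A - 1) choose (N - j))" using insert by simp
  also have "\<dots> = (\<Sum>j\<le>N. (j + card A - 1) choose j)"
  proof -
    have "(\<Sum>j\<in>{0..N}. (N - j + card A - 1) choose (N - j)) = (\<Sum>j<Suc N. (Suc N - Suc j + card A - 1) choose (Suc N - Suc j))"
      by (simp add: atLeast0AtMost lessThan_Suc_atMost)
    also have "\<dots> = (\<Sum>j<Suc N. (j + card A - 1) choose j)"
      by (rule sum.nat_diff_reindex)
    finally show ?thesis by (simp add: lessThan_Suc_atMost)
  qed
  also have "\<dots> = (N + card A) choose N" by (rule sum_choose_aux)
  finally show ?case using eq fin insert by simp
qed


definition Sset :: "nat \<Rightarrow> nat \<Rightarrow> nat set \<Rightarrow> nat set set" where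
  "Sset n k R = {S. S \<subseteq> {1..n} \<and> card S = k \<and> (\<forall>i\<in>R. spt n k S (Suc i) = spt n k S i + 1)}"

definition gap :: "nat \<Rightarrow> nat \<Rightarrow> nat set \<Rightarrow> nat \<Rightarrow> nat" where
  "gap n k S i = (if i \<le> k then spt n k S (Suc i) - spt n k S i - 1 else 0)"

definition P :: "(nat \<Rightarrow> nat) \<Rightarrow> nat \<Rightarrow> nat" where
  "P g i = (\<Sum>j<i. g j + 1)"

lemma spt_strict:
  assumes S: "S \<subseteq> {1..n}" "card S = k" and i: "i \<le> k"
  shows "spt n k S i < spt n k S (Suc i)"
proof -
  have fin: "finite S" using S finite_subset by blast
  let ?xs = "sorted_list_of_set S"
  have len: "length ?xs = k" using S by simp
  have sw: "sorted_wrt (<) ?xs" by simp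
  have inS: "j < k \<Longrightarrow> ?xs ! j \<in> S" for j
    using len fin by (metis nth_mem set_sorted_list_of_set)
  show ?thesis
  proof (cases "i = 0")
    case True
    show ?thesis
    proof (cases "k = 0")
      case True then show ?thesis using \<open>i = 0\<close> by (simp add: spt_def)
    next
      case False
      then have "?xs ! 0 \<in> S" using inS by simp
      then have "?xs ! 0 \<ge> 1" using S by auto
      then show ?thesis using \<open>i = 0\<close> False by (simp add: spt_def)
    qed
  next
    case False
    show ?thesis
    proof (cases "i = k")
      case True
      have "?xs ! (k - 1) \<in> S" using inS False True by simp
      then have "?xs ! (k-1) \<le> n" using S by auto
      then show ?thesis using False True by (simp add: spt_def)
    next
      case False2: False
      have "?xs ! (i - 1) < ?xs ! i" using sorted_wrt_nth_less[OF sw, of "i-1" i] len i False False2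
        by simp
      then show ?thesis using False False2 i by (simp add: spt_def)
    qed
  qed
qed

lemma P_Suc: "P g (Suc i) = P g i + g i + 1"
  by (simp add: P_def)

lemma P_gap:
  assumes S: "S \<subseteq> {1..n}" "card S = k"
  shows "i \<le> Suc k \<Longrightarrow> P (gap n k S) i = spt n k S i"
proof (induction i)
  case 0 then show ?case by (simp add: P_def spt_def)
next
  case (Suc i)
  then have "P (gap n k S) i = spt n k S i" by simp
  moreover have "spt n k S i < spt n k S (Suc i)" using spt_strict[OF S] Suc by simp
  ultimately show ?case using Suc by (simp add: P_Suc gap_def)
qed

lemma P_strict: "i < j \<Longrightarrow> P g i < P g j"
proof (induction j)
  case 0 then show ?case by simp
next
  case (Suc j) then show ?case by (auto simp: P_Suc less_Suc_eq)
qed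

lemma sorted_P: "sorted_list_of_set (P g ` {1..k}) = map (P g) [1..<Suc k]"
proof -
  have sm: "strict_mono (P g)" by (simp add: strict_mono_def P_strict)
  have "sorted_wrt (<) (map (P g) [1..<Suc k])"
    by (auto simp del: upt_Suc simp: sorted_wrt_map sorted_wrt_iff_nth_less P_strict)
  moreover have "set (map (P g) [1..<Suc k]) = P g ` {1..k}" by auto
  moreover have "length (map (P g) [1..<Suc k]) = card (P g ` {1..k})"
    using sm strict_mono_imp_inj_on card_image by (metis card_atLeastAtMost diff_Suc_1 length_map length_upt inj_on_subset subset_UNIV)
  ultimately show ?thesis
    by (subst sorted_list_of_set_unique[symmetric]) auto
qed


lemma P_sum0: "P g i = sum g {..<i} + i"
  by (induct i) (simp_all add: P_def)

lemma P_sum: "P g (Suc k) = sum g {..<Suc k} + Suc k"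
  by (rule P_sum0)

lemma sum_A:
  assumes "R \<subseteq> {0..k}" "\<forall>i. i \<notin> {0..k} - R \<longrightarrow> g i = 0"
  shows "sum g {..<Suc k} = sum g ({0..k} - R)"
  using assms by (intro sum.mono_neutral_right) auto

lemma spt_psi:
  assumes R: "R \<subseteq> {0..k}" and g: "g \<in> Cset ({0..k} - R) (n - k)" and kn: "k \<le> n"
    and i: "i \<le> Suc k"
  shows "spt n k (P g ` {1..k}) i = P g i"
proof -
  have z: "\<forall>i. i \<notin> {0..k} - R \<longrightarrow> g i = 0" and s: "sum g ({0..k} - R) = n - k"
    using g by (auto simp: Cset_def)
  have PS: "P g (Suc k) = n + 1" using P_sum[of g k] sum_A[OF R z] s kn by simp
  show ?thesis
  proof (cases "i = 0")
    case True then show ?thesis by (simp add: spt_def P_def)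
  next
    case False
    show ?thesis
    proof (cases "i = Suc k")
      case True then show ?thesis using PS by (simp add: spt_def)
    next
      case False2: False
      have "map (P g) [1..<Suc k] ! (i - 1) = P g i"
        using False False2 i by (simp del: upt_Suc add: nth_upt)
      then show ?thesis using False False2 unfolding spt_def sorted_P by simp
    qed
  qed
qed

lemma binomR_closed:
  assumes R: "R \<subseteq> {0..k}"
  shows "binomR n k R = (if k \<le> n then (n - k + card ({0..k} - R) - 1) choose (n - k) else 0)"
proof (cases "k \<le> n")
  case False
  have "Sset n k R = {}"
  proof (rule ccontr)
    assume "Sset n k R \<noteq> {}"
    then obtain S where "S \<subseteq> {1..n}" "card S = k" by (auto simp: Sset_def)
    then have "k \<le> n" using card_mono[of "{1..n}" S] by simp
    then show False using False by simp
  qed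
  have "binomR n k R = card (Sset n k R)" by (simp add: binomR_def Sset_def)
  then show ?thesis using False \<open>Sset n k R = {}\<close> by simp
next
  case kn: True
  let ?A = "{0..k} - R"
  have bij: "bij_betw (gap n k) (Sset n k R) (Cset ?A (n - k))"
  proof (rule bij_betw_byWitness[where f' = "\<lambda>g. P g ` {1..k}"])
    show "\<forall>S\<in>Sset n k R. P (gap n k S) ` {1..k} = S"
    proof
      fix S assume "S \<in> Sset n k R"
      then have S: "S \<subseteq> {1..n}" "card S = k" by (auto simp: Sset_def)
      have fin: "finite S" using S finite_subset by blast
      let ?xs = "sorted_list_of_set S"
      have len: "length ?xs = k" using S by simp
      have "P (gap n k S) ` {1..k} = spt n k S ` {1..k}"
        using P_gap[OF S] by (intro image_cong) auto
      also have "\<dots> = (\<lambda>j. ?xs ! j) ` {..<k}"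
      proof
        show "spt n k S ` {1..k} \<subseteq> (!) ?xs ` {..<k}"
          by (auto simp: spt_def image_iff intro!: bexI[where x="_ - 1"])
        show "(!) ?xs ` {..<k} \<subseteq> spt n k S ` {1..k}"
        proof
          fix x assume "x \<in> (!) ?xs ` {..<k}"
          then obtain j where "j < k" "x = ?xs ! j" by auto
          then have "x = spt n k S (Suc j)" "Suc j \<in> {1..k}" by (auto simp: spt_def)
          then show "x \<in> spt n k S ` {1..k}" by blast
        qed
      qed
      also have "\<dots> = set ?xs" using len by (auto simp: set_conv_nth)
      also have "\<dots> = S" using fin by simp
      finally show "P (gap n k S) ` {1..k} = S" .
    qed
  next
    show "\<forall>g\<in>Cset ?A (n - k). gap n k (P g ` {1..k}) = g"
    proof
      fix g assume g: "g \<in> Cset ?A (n - k)"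
      show "gap n k (P g ` {1..k}) = g"
      proof
        fix i show "gap n k (P g ` {1..k}) i = g i"
        proof (cases "i \<le> k")
          case True
          then show ?thesis using spt_psi[OF R g kn, of i] spt_psi[OF R g kn, of "Suc i"]
            by (simp add: gap_def P_Suc)
        next
          case False
          then show ?thesis using g by (simp add: gap_def Cset_def)
        qed
      qed
    qed
  next
    show "gap n k ` Sset n k R \<subseteq> Cset ?A (n - k)"
    proof
      fix x assume "x \<in> gap n k ` Sset n k R"
      then obtain S where SS: "S \<in> Sset n k R" and x: "x = gap n k S" by auto
      then have S: "S \<subseteq> {1..n}" "card S = k" and c: "\<forall>i\<in>R. spt n k S (Suc i) = spt n k S i + 1"
        by (auto simp: Sset_def)
      have z: "\<forall>i. i \<notin> ?A \<longrightarrow> gap n k S i = 0"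
        using c by (auto simp: gap_def)
      have "sum (gap n k S) ?A = sum (gap n k S) {..<Suc k}"
        using sum_A[OF R z] by simp
      also have "\<dots> = P (gap n k S) (Suc k) - Suc k" using P_sum by simp
      also have "\<dots> = n - k" using P_gap[OF S, of "Suc k"] by (simp add: spt_def)
      finally show "x \<in> Cset ?A (n - k)" using z x by (simp add: Cset_def)
    qed
  next
    show "(\<lambda>g. P g ` {1..k}) ` Cset ?A (n - k) \<subseteq> Sset n k R"
    proof
      fix x assume "x \<in> (\<lambda>g. P g ` {1..k}) ` Cset ?A (n - k)"
      then obtain g where g: "g \<in> Cset ?A (n - k)" and x: "x = P g ` {1..k}" by auto
      have sub: "x \<subseteq> {1..n}"
      proof
        fix y assume "y \<in> x"
        then obtain i where i: "i \<in> {1..k}" "y = P g i" using x by auto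
        have "P g 0 < P g i" using i P_strict by simp
        moreover have "P g i < P g (Suc k)" using i P_strict by simp
        moreover have "P g (Suc k) = n + 1" using spt_psi[OF R g kn, of "Suc k"] by (simp add: spt_def)
        ultimately show "y \<in> {1..n}" using i by (simp add: P_def)
      qed
      have "inj_on (P g) {1..k}" by (intro strict_mono_imp_inj_on) (simp add: strict_mono_def P_strict)
      then have cd: "card x = k" using x card_image by fastforce
      have "\<forall>i\<in>R. spt n k x (Suc i) = spt n k x i + 1"
      proof
        fix i assume iR: "i \<in> R"
        then have "i \<le> k" using R by auto
        moreover have "g i = 0" using g iR by (auto simp: Cset_def)
        ultimately show "spt n k x (Suc i) = spt n k x i + 1"
          using x spt_psi[OF R g kn, of i] spt_psi[OF R g kn, of "Suc i"] by (simp add: P_Suc)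
      qed
      then show "x \<in> Sset n k R" using sub cd by (simp add: Sset_def)
    qed
  qed
  have "binomR n k R = card (Sset n k R)" by (simp add: binomR_def Sset_def)
  also have "\<dots> = card (Cset ?A (n - k))" using bij bij_betw_same_card by blast
  also have "\<dots> = (n - k + card ?A - 1) choose (n - k)" using Cset_card[of ?A "n-k"] by simp
  finally show ?thesis using kn by simp
qed


lemma choose_gchoose_m1: "real ((j + m - 1) choose j) = ((real j + real m - 1) gchoose j)"
proof (cases "j + m = 0")
  case True then show ?thesis by simp
next
  case False
  then obtain p where p: "j + m = Suc p" by (cases "j + m") auto
  have "real (Suc p) = real j + real m" using p by (metis of_nat_add)
  then have "real (j + m - 1) = real j + real m - 1" using p by simp
  then show ?thesis by (metis binomial_gbinomial)
qed

lemma ident: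
  assumes mm: "m + m' = Suc k" and kn: "k \<le> n"
  shows "real ((n - k + m - 1) choose (n - k)) =
    (\<Sum>l\<in>{0..n}. (-1::real) powi (int l - int k) * real (if k \<le> l then (l - k + m' - 1) choose (l - k) else 0) * real (n choose l))"
proof -
  let ?t = "\<lambda>l. (-1::real) powi (int l - int k) * real (if k \<le> l then (l - k + m' - 1) choose (l - k) else 0) * real (n choose l)"
  let ?N = "n - k"
  have eq: "{0..n} = {0..<k} \<union> {k..n}" using kn by auto
  have "sum ?t {0..n} = sum ?t {0..<k} + sum ?t {k..n}"
    by (subst eq) (rule sum.union_disjoint; auto)
  also have "sum ?t {0..<k} = 0" by (intro sum.neutral) auto
  also have "sum ?t {k..n} = sum (\<lambda>j. ?t (j + k)) {0..?N}"
    using sum.shift_bounds_cl_nat_ivl[of ?t 0 k ?N] kn by simp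
  also have "\<dots> = (\<Sum>j\<in>{0..?N}. (- real m' gchoose j) * (real n gchoose (?N - j)))"
  proof (rule sum.cong)
    fix j assume j: "j \<in> {0..?N}"
    have a: "(-1::real) powi (int (j + k) - int k) = (-1) ^ j" by simp
    have b: "(- real m' gchoose j) = (-1) ^ j * ((real j + real m' - 1) gchoose j)"
      by (subst gbinomial_negated_upper) simp
    have t: "?t (j + k) = (-1) ^ j * real ((j + m' - 1) choose j) * real (n choose (j + k))"
      by simp
    have c: "real (n choose (j + k)) = (real n gchoose (?N - j))"
      using j kn by (metis binomial_gbinomial binomial_symmetric add.commute atLeastAtMost_iff diff_diff_left le_diff_conv2)
    show "?t (j + k) = (- real m' gchoose j) * (real n gchoose (?N - j))"
      using t b c unfolding choose_gchoose_m1 by simp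
  qed simp
  also have "\<dots> = (- real m' + real n) gchoose ?N" by (rule gbinomial_Vandermonde)
  also have "- real m' + real n = real ?N + real m - 1" using mm kn by simp
  also have "(real ?N + real m - 1) gchoose ?N = real ((?N + m - 1) choose ?N)"
    by (rule choose_gchoose_m1[symmetric])
  finally show ?thesis by simp
qed

theorem mainTheorem9:
  fixes n k :: nat and R :: "nat set"
  assumes "R \<subseteq> {0..k}"
  shows "real (binomR n k R) =
    (\<Sum>l\<in>{0..n}. (-1::real) powi (int l - int k) * real (binomR l k ({0..k} - R)) * real (n choose l))"
proof -
  have R2: "{0..k} - R \<subseteq> {0..k}" by auto
  have RR: "{0..k} - ({0..k} - R) = R" using assms by auto
  have "card R \<le> Suc k" using card_mono[OF _ assms] by simp
  then have mm: "card ({0..k} - R) + card R = Suc k"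
    using assms by (simp add: card_Diff_subset finite_subset card_mono)
  have bl: "binomR l k ({0..k} - R) = (if k \<le> l then (l - k + card R - 1) choose (l - k) else 0)" for l
    using binomR_closed[OF R2, of l] RR by simp
  show ?thesis
  proof (cases "k \<le> n")
    case True
    show ?thesis unfolding bl binomR_closed[OF assms] using ident[OF mm True] True by simp
  next
    case False
    show ?thesis unfolding bl binomR_closed[OF assms] using False
      by (auto intro!: sum.neutral[symmetric])
  qed
qed

end
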